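(* Let $T:X\to Y$ be a disjointness preserving linear bijection between Archimedean vector lattices. Then $T$ satisfies condition $(\beta)$ if and only if $T^{-1}$ is disjointness preserving.
   Context: All vector lattices are Archimedean. For a subset $A$ of a vector lattice $X$, $A^d=\{x\in X: |x|\wedge|a|=0 \text{ for all } a\in A\}$ and $A^{dd}=(A^d)^d$. For $a,b\in X$ we write $a\lhd b$ if $\{a\}^{dd}\subseteq\{b\}^{dd}$. A linear operator $S$ satisfies condition $(\beta)$ if $Sa\lhd Sb$ whenever $a\lhd b$. A linear operator is disjointness preserving if it maps disjoint elements to disjoint elements. *)

theory Defs
  imports "HOL-Analysis.Analysis" "HOL-Library.Lattice_Algebras"
begin

class vector_lattice = ordered_real_vector + lattice_ab_group_add_abs

class archimedean_vector_lattice = vector_lattice +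
  assumes archimedean_vl: "0 \<le> x \<Longrightarrow> (\<And>n::nat. real n *\<^sub>R x \<le> y) \<Longrightarrow> x = 0"

definition disj_compl :: "'a::vector_lattice set \<Rightarrow> 'a set" where
  "disj_compl A = {x. \<forall>a\<in>A. inf \<bar>x\<bar> \<bar>a\<bar> = 0}"

definition band_le :: "'a::vector_lattice \<Rightarrow> 'a \<Rightarrow> bool" where
  "band_le a b \<longleftrightarrow> disj_compl (disj_compl {a}) \<subseteq> disj_compl (disj_compl {b})"

definition disjointness_preserving :: "('a::vector_lattice \<Rightarrow> 'b::vector_lattice) \<Rightarrow> bool" where
  "disjointness_preserving S \<longleftrightarrow>
     (\<forall>x y. inf \<bar>x\<bar> \<bar>y\<bar> = 0 \<longrightarrow> inf \<bar>S x\<bar> \<bar>S y\<bar> = 0)"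

definition condition_beta :: "('a::vector_lattice \<Rightarrow> 'b::vector_lattice) \<Rightarrow> bool" where
  "condition_beta S \<longleftrightarrow> (\<forall>a b. band_le a b \<longrightarrow> band_le (S a) (S b))"

end

theory Submission
  imports Defs
begin

lemma dc_anti: "A \<subseteq> B \<Longrightarrow> disj_compl B \<subseteq> disj_compl A"
  unfolding disj_compl_def by auto

lemma dc_sym: "x \<in> disj_compl A \<Longrightarrow> a \<in> A \<Longrightarrow> inf \<bar>a\<bar> \<bar>x\<bar> = 0"
  unfolding disj_compl_def by (auto simp: inf_commute)

lemma dc_dd: "x \<in> disj_compl (disj_compl A) \<Longrightarrow> y \<in> disj_compl A \<Longrightarrow> inf \<bar>x\<bar> \<bar>y\<bar> = 0"
  unfolding disj_compl_def by auto

lemma dc_self: "a \<in> disj_compl (disj_compl {a})"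
  unfolding disj_compl_def by (auto simp: inf_commute)

lemma dc_single: "x \<in> disj_compl {a} \<longleftrightarrow> inf \<bar>x\<bar> \<bar>a\<bar> = 0"
  unfolding disj_compl_def by auto

lemma inf_abs_band:
  fixes x y :: "'a::vector_lattice"
  shows "band_le (inf \<bar>x\<bar> \<bar>y\<bar>) x"
proof -
  let ?z = "inf \<bar>x\<bar> \<bar>y\<bar>"
  have z0: "0 \<le> ?z" by simp
  have "disj_compl {x} \<subseteq> disj_compl {?z}"
  proof
    fix w assume "w \<in> disj_compl {x}"
    hence h: "inf \<bar>w\<bar> \<bar>x\<bar> = 0" by (simp add: dc_single)
    have az: "\<bar>?z\<bar> = ?z" using z0 by (simp add: abs_of_nonneg)
    have "inf \<bar>w\<bar> ?z \<le> inf \<bar>w\<bar> \<bar>x\<bar>"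
      by (meson inf_le1 inf_le2 le_infI le_infI1 order_trans)
    moreover have "0 \<le> inf \<bar>w\<bar> ?z" by simp
    ultimately have "inf \<bar>w\<bar> ?z = 0" using h by (simp add: order_antisym)
    thus "w \<in> disj_compl {?z}" by (simp add: dc_single az)
  qed
  thus ?thesis unfolding band_le_def by (rule dc_anti)
qed

theorem proposition3p6:
  fixes T :: "'a::archimedean_vector_lattice \<Rightarrow> 'b::archimedean_vector_lattice"
  assumes "linear T" and "bij T" and "disjointness_preserving T"
  shows "condition_beta T \<longleftrightarrow> disjointness_preserving (inv T)"
proof
  have invT: "\<And>u. inv T (T u) = u" using assms(2) by (simp add: bij_is_inj)
  have surjT: "\<And>y. \<exists>u. y = T u" using assms(2) by (metis bij_is_surj surjD)
  have T0: "T 0 = 0" using assms(1) by (simp add: linear_0)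
  have injT: "\<And>u v. T u = T v \<Longrightarrow> u = v" using assms(2) by (meson bij_is_inj injD)
  {
    assume beta: "condition_beta T"
    show "disjointness_preserving (inv T)"
      unfolding disjointness_preserving_def
    proof (intro allI impI)
      fix x y :: 'b
      assume xy: "inf \<bar>x\<bar> \<bar>y\<bar> = 0"
      obtain u where u: "x = T u" using surjT by blast
      obtain v where v: "y = T v" using surjT by blast
      let ?z = "inf \<bar>u\<bar> \<bar>v\<bar>"
      have b1: "band_le (T ?z) (T u)" using beta inf_abs_band unfolding condition_beta_def by blast
      have "band_le ?z v" using inf_abs_band[of v u] by (simp add: inf_commute)
      hence b2: "band_le (T ?z) (T v)" using beta unfolding condition_beta_def by blast
      have m1: "T ?z \<in> disj_compl (disj_compl {T u})" using b1 dc_self unfolding band_le_def by blast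
      have m2: "T ?z \<in> disj_compl (disj_compl {T v})" using b2 dc_self unfolding band_le_def by blast
      have "T v \<in> disj_compl {T u}" using xy u v by (simp add: dc_single inf_commute)
      hence "inf \<bar>T ?z\<bar> \<bar>T v\<bar> = 0" using m1 dc_dd by blast
      hence "T ?z \<in> disj_compl {T v}" by (simp add: dc_single)
      hence "inf \<bar>T ?z\<bar> \<bar>T ?z\<bar> = 0" using m2 dc_dd by blast
      hence "T ?z = 0" by simp
      hence "?z = 0" using T0 injT by metis
      thus "inf \<bar>inv T x\<bar> \<bar>inv T y\<bar> = 0" using u v invT by simp
    qed
  }
  {
    assume dpi: "disjointness_preserving (inv T)"
    have iff: "\<And>u v. inf \<bar>T u\<bar> \<bar>T v\<bar> = 0 \<longleftrightarrow> inf \<bar>u\<bar> \<bar>v\<bar> = 0"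
      using dpi assms(3) invT unfolding disjointness_preserving_def by metis
    have img: "\<And>A. disj_compl (T ` A) = T ` disj_compl A"
    proof -
      fix A
      show "disj_compl (T ` A) = T ` disj_compl A"
      proof
        show "disj_compl (T ` A) \<subseteq> T ` disj_compl A"
        proof
          fix y assume y: "y \<in> disj_compl (T ` A)"
          obtain u where u: "y = T u" using surjT by blast
          have "u \<in> disj_compl A" using y u iff unfolding disj_compl_def by auto
          thus "y \<in> T ` disj_compl A" using u by blast
        qed
        show "T ` disj_compl A \<subseteq> disj_compl (T ` A)"
          using iff unfolding disj_compl_def by auto
      qed
    qed
    have dd: "\<And>a. disj_compl (disj_compl {T a}) = T ` disj_compl (disj_compl {a})"
      using img by (metis image_empty image_insert)
    show "condition_beta T"
      unfolding condition_beta_def band_le_def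
      by (simp only: dd) (blast intro: image_mono)
  }
qed

end
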